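(* Let $G=(V,E)$ be a graph with edges ordered $e_1,\dots,e_m$ that has an $f$-MFD blocking set $\{(e_i,F_i)\}_{i=1}^m$. Then for every $S\subseteq V$, the induced subgraph $G[S]$, with its edges ordered as inherited from the ordering of $E$, has $$\Big\{\Big(e_i,\ (F_i\cap V\cap S)\cup\big(F_i\cap E\cap \tbinom{S}{2}\big)\Big)\Big\}_{e_i\in E(G[S])}$$ as an $f$-MFD blocking set.
   Context: For a graph $G=(V,E)$ and $F\subseteq V\cup E$, $G-F$ is obtained by deleting the vertices of $F\cap V$ (with incident edges) and the edges of $F\cap E$. $F$ damages an edge $e$ if $e$ is not an edge of $G-F$. For $v\in V$ let $\deg_G(v,F)=|\{u\in N_G(v): u\in F\text{ or }\{u,v\}\in F\}|$ and $\deg_G(F)=\max_{v\in V\setminus F}\deg_G(v,F)$. Given ordered edges $e_1,\dots,e_m$ with $e_i=\{u_i,v_i\}$, let $G_{<i}=(V,\{e_1,\dots,e_{i-1}\})$. A connectivity blocking set for $G$ is a collection $\{(e_i,F_i)\}_{i=1}^m$ with $F_i\subseteq V\cup E$ such that (1) $F_i$ does not damage $e_i$ and (2) $u_i,v_i$ are disconnected in $G_{<i}-F_i$. It is an $f$-MFD blocking set if moreover $\deg_G(F_i)\le f$ for all $i$. For the induced subgraph these notions are taken with respect to $G[S]$ and its inherited edge order. *)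

theory Defs
  imports Main
begin

text \<open>A set F \<subseteq> V \<union> E is represented as a pair (FV, FE) with FV \<subseteq> V the deleted
  vertices and FE \<subseteq> E the deleted edges.\<close>

type_synonym 'a fset_VE = "'a set \<times> 'a set set"

definition graph :: "'a set \<Rightarrow> 'a set list \<Rightarrow> bool" where
  "graph V es \<longleftrightarrow> finite V \<and> distinct es \<and> (\<forall>e\<in>set es. e \<subseteq> V \<and> card e = 2)"

definition in_VE :: "'a set \<Rightarrow> 'a set list \<Rightarrow> 'a fset_VE \<Rightarrow> bool" where
  "in_VE V es F \<longleftrightarrow> fst F \<subseteq> V \<and> snd F \<subseteq> set es"

definition edges_minus :: "'a set set \<Rightarrow> 'a fset_VE \<Rightarrow> 'a set set" where
  "edges_minus E F = {e \<in> E. e \<inter> fst F = {} \<and> e \<notin> snd F}"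

definition damages :: "'a set list \<Rightarrow> 'a fset_VE \<Rightarrow> 'a set \<Rightarrow> bool" where
  "damages es F e \<longleftrightarrow> e \<notin> edges_minus (set es) F"

definition nbrs :: "'a set list \<Rightarrow> 'a \<Rightarrow> 'a set" where
  "nbrs es v = {u. {u, v} \<in> set es}"

definition deg_v :: "'a set list \<Rightarrow> 'a \<Rightarrow> 'a fset_VE \<Rightarrow> nat" where
  "deg_v es v F = card {u \<in> nbrs es v. u \<in> fst F \<or> {u, v} \<in> snd F}"

text \<open>deg_G(F) = max over v \<in> V \ F of deg_G(v,F) (0 if V \ F is empty).\<close>
definition deg_F :: "'a set \<Rightarrow> 'a set list \<Rightarrow> 'a fset_VE \<Rightarrow> nat" where
  "deg_F V es F = Sup ((\<lambda>v. deg_v es v F) ` (V - fst F))"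

text \<open>u and v are connected in G_{<i} - F (graph on V - FV with edges e_1..e_{i-1}
  not damaged by F); i is 0-based here, so G_{<i} has edges take i es.\<close>
definition connected_in :: "'a set \<Rightarrow> 'a set set \<Rightarrow> 'a \<Rightarrow> 'a \<Rightarrow> bool" where
  "connected_in W E u v \<longleftrightarrow> u \<in> W \<and> v \<in> W \<and>
      (\<lambda>x y. {x, y} \<in> E)\<^sup>*\<^sup>* u v"

definition conn_blocking_set ::
  "'a set \<Rightarrow> 'a set list \<Rightarrow> ('a set \<times> 'a fset_VE) list \<Rightarrow> bool" where
  "conn_blocking_set V es bs \<longleftrightarrow> map fst bs = es \<and>
     (\<forall>i < length bs. let e = fst (bs ! i); F = snd (bs ! i) in
        in_VE V es F \<and> \<not> damages es F e \<and>
        (\<forall>u v. e = {u, v} \<longrightarrow>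
           \<not> connected_in (V - fst F) (edges_minus (set (take i es)) F) u v))"

definition mfd_blocking_set ::
  "nat \<Rightarrow> 'a set \<Rightarrow> 'a set list \<Rightarrow> ('a set \<times> 'a fset_VE) list \<Rightarrow> bool" where
  "mfd_blocking_set f V es bs \<longleftrightarrow> conn_blocking_set V es bs \<and>
     (\<forall>p \<in> set bs. deg_F V es (snd p) \<le> f)"

definition induced_edges :: "'a set \<Rightarrow> 'a set list \<Rightarrow> 'a set list" where
  "induced_edges S es = filter (\<lambda>e. e \<subseteq> S) es"

definition restrict_bs ::
  "'a set \<Rightarrow> 'a set list \<Rightarrow> 'a set \<Rightarrow> ('a set \<times> 'a fset_VE) list \<Rightarrow> ('a set \<times> 'a fset_VE) list" where
  "restrict_bs V es S bs =
     map (\<lambda>(e, F). (e, (fst F \<inter> V \<inter> S, snd F \<inter> set es \<inter> {x. x \<subseteq> S \<and> card x = 2})))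
       (filter (\<lambda>p. fst p \<subseteq> S) bs)"

end

theory Submission
  imports Defs
begin

lemma filter_index:
  assumes "j < length (filter P xs)"
  shows "\<exists>i < length xs. filter P xs ! j = xs ! i \<and> take j (filter P xs) = filter P (take i xs)"
  using assms
proof (induction xs arbitrary: j)
  case Nil then show ?case by simp
next
  case (Cons x xs)
  show ?case
  proof (cases "P x")
    case True
    show ?thesis
    proof (cases j)
      case 0 then show ?thesis using True by (intro exI[of _ 0]) auto
    next
      case (Suc k)
      with Cons.prems True have "k < length (filter P xs)" by simp
      from Cons.IH[OF this] obtain i where "i < length xs" "filter P xs ! k = xs ! i"
        "take k (filter P xs) = filter P (take i xs)" by blast
      then show ?thesis using True Suc by (intro exI[of _ "Suc i"]) auto
    qed
  next
    case False
    with Cons.prems have "j < length (filter P xs)" by simp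
    from Cons.IH[OF this] obtain i where "i < length xs" "filter P xs ! j = xs ! i"
      "take j (filter P xs) = filter P (take i xs)" by blast
    then show ?thesis using False by (intro exI[of _ "Suc i"]) auto
  qed
qed

lemma nat_Sup_le:
  fixes A :: "nat set"
  assumes "finite A" "\<And>x. x \<in> A \<Longrightarrow> x \<le> f"
  shows "Sup A \<le> f"
proof (cases "A = {}")
  case True then show ?thesis by (simp add: bot_nat_def[symmetric])
next
  case False then show ?thesis using assms by (simp add: cSup_least)
qed

lemma nat_le_Sup:
  fixes A :: "nat set"
  assumes "finite A" "x \<in> A"
  shows "x \<le> Sup A"
  using assms by (simp add: le_cSup_finite)

lemma rtranclp_mono_E:
  assumes "(\<lambda>x y. {x, y} \<in> E1)\<^sup>*\<^sup>* u v" "E1 \<subseteq> E2"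
  shows "(\<lambda>x y. {x, y} \<in> E2)\<^sup>*\<^sup>* u v"
  using assms(1) by (induction rule: rtranclp_induct) (auto intro: rtranclp.rtrancl_into_rtrancl assms(2)[THEN subsetD])

theorem mainTheorem3:
  fixes V S :: "'a set" and es :: "'a set list" and f :: nat
    and bs :: "('a set \<times> 'a fset_VE) list"
  assumes "graph V es"
    and "mfd_blocking_set f V es bs"
    and "S \<subseteq> V"
  shows "mfd_blocking_set f S (induced_edges S es) (restrict_bs V es S bs)"
proof -
  define P where "P = (\<lambda>p::('a set \<times> 'a fset_VE). fst p \<subseteq> S)"
  define g where "g = (\<lambda>(e::'a set, F::'a fset_VE). (e, (fst F \<inter> V \<inter> S, snd F \<inter> set es \<inter> {x. x \<subseteq> S \<and> card x = 2})))"
  have rb: "restrict_bs V es S bs = map g (filter P bs)"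
    unfolding restrict_bs_def g_def P_def by simp
  have fin: "finite V" and ed: "\<And>e. e \<in> set es \<Longrightarrow> e \<subseteq> V \<and> card e = 2"
    using assms(1) unfolding graph_def by auto
  have es: "es = map fst bs" and cb: "\<And>i. i < length bs \<Longrightarrow> (let e = fst (bs ! i); F = snd (bs ! i) in
        in_VE V es F \<and> \<not> damages es F e \<and>
        (\<forall>u v. e = {u, v} \<longrightarrow>
           \<not> connected_in (V - fst F) (edges_minus (set (take i es)) F) u v))"
    and dg: "\<And>p. p \<in> set bs \<Longrightarrow> deg_F V es (snd p) \<le> f"
    using assms(2) unfolding mfd_blocking_set_def conn_blocking_set_def by auto
  define es' where "es' = induced_edges S es"
  have es': "es' = map fst (filter P bs)"
    unfolding es'_def induced_edges_def es P_def by (simp add: filter_map comp_def)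
  have gF: "\<And>p. snd (g p) = (fst (snd p) \<inter> V \<inter> S, snd (snd p) \<inter> set es \<inter> {x. x \<subseteq> S \<and> card x = 2})"
    and gE: "\<And>p. fst (g p) = fst p" unfolding g_def by (auto split: prod.splits)
  have fstmap: "map fst (restrict_bs V es S bs) = es'"
    unfolding rb es' by (simp add: gE comp_def)
  have sub_es': "set es' \<subseteq> set es" "\<And>e. e \<in> set es' \<Longrightarrow> e \<subseteq> S"
    unfolding es'_def induced_edges_def by auto
  have degpart: "deg_F S es' (snd (g p)) \<le> f" if "p \<in> set bs" for p
  proof -
    obtain e FV FE where p: "p = (e, (FV, FE))" by (cases p) auto
    have d: "deg_F V es (FV, FE) \<le> f" using dg[OF that] p by simp
    let ?F' = "(FV \<inter> V \<inter> S, FE \<inter> set es \<inter> {x. x \<subseteq> S \<and> card x = 2})"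
    have "snd (g p) = ?F'" using gF p by simp
    moreover have "deg_F S es' ?F' \<le> f"
      unfolding deg_F_def
    proof (rule nat_Sup_le)
      show "finite ((\<lambda>v. deg_v es' v ?F') ` (S - fst ?F'))"
        using fin assms(3) by (meson finite_Diff finite_imageI finite_subset)
    next
      fix x assume "x \<in> (\<lambda>v. deg_v es' v ?F') ` (S - fst ?F')"
      then obtain v where v: "v \<in> S" "v \<notin> FV" and x: "x = deg_v es' v ?F'" using assms(3) by auto
      have nf: "finite (nbrs es v)"
      proof (rule finite_subset[OF _ fin])
        show "nbrs es v \<subseteq> V" unfolding nbrs_def using ed by auto
      qed
      have "x \<le> deg_v es v (FV, FE)"
        unfolding x deg_v_def
        by (rule card_mono) (use nf sub_es' in \<open>auto simp: nbrs_def\<close>)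
      also have "\<dots> \<le> deg_F V es (FV, FE)"
        unfolding deg_F_def
        by (rule nat_le_Sup) (use fin v assms(3) in auto)
      finally show "x \<le> f" using d by simp
    qed
    ultimately show ?thesis by simp
  qed
  show ?thesis
    unfolding mfd_blocking_set_def conn_blocking_set_def es'_def[symmetric]
  proof (intro conjI allI ballI impI)
    show "map fst (restrict_bs V es S bs) = es'" by (rule fstmap)
  next
    fix p assume "p \<in> set (restrict_bs V es S bs)"
    then obtain q where "q \<in> set bs" "p = g q" unfolding rb by auto
    then show "deg_F S es' (snd p) \<le> f" using degpart by simp
  next
    fix j assume j: "j < length (restrict_bs V es S bs)"
    hence j': "j < length (filter P bs)" unfolding rb by simp
    from filter_index[OF j'] obtain i where i: "i < length bs" "filter P bs ! j = bs ! i"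
      "take j (filter P bs) = filter P (take i bs)" by blast
    obtain e FV FE where bi: "bs ! i = (e, (FV, FE))" by (metis prod.exhaust)
    have "P (filter P bs ! j)" using nth_mem[OF j'] by simp
    hence Pe: "e \<subseteq> S" using i(2) bi unfolding P_def by simp
    have rj: "restrict_bs V es S bs ! j = (e, (FV \<inter> V \<inter> S, FE \<inter> set es \<inter> {x. x \<subseteq> S \<and> card x = 2}))"
      unfolding rb using j' i(2) bi by (simp add: g_def)
    have tk: "take j es' = filter (\<lambda>e. e \<subseteq> S) (take i es)"
    proof -
      have "take j es' = map fst (take j (filter P bs))" unfolding es' by (simp add: take_map)
      also have "\<dots> = map fst (filter P (take i bs))" using i(3) by simp
      also have "\<dots> = filter (\<lambda>e. e \<subseteq> S) (map fst (take i bs))"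
        by (simp add: filter_map comp_def P_def)
      also have "\<dots> = filter (\<lambda>e. e \<subseteq> S) (take i es)" unfolding es by (simp add: take_map)
      finally show ?thesis .
    qed
    have c: "in_VE V es (FV, FE)" "\<not> damages es (FV, FE) e"
      "\<And>u v. e = {u, v} \<Longrightarrow> \<not> connected_in (V - FV) (edges_minus (set (take i es)) (FV, FE)) u v"
      using cb[OF i(1)] bi by (auto simp: Let_def)
    have eS: "e \<in> set es'" using c(2) Pe unfolding damages_def edges_minus_def es'_def induced_edges_def by auto
    let ?F' = "(FV \<inter> V \<inter> S, FE \<inter> set es \<inter> {x. x \<subseteq> S \<and> card x = 2})"
    have A: "in_VE S es' ?F'"
      unfolding in_VE_def es'_def induced_edges_def by auto
    have B: "\<not> damages es' ?F' e"
      using c(2) eS unfolding damages_def edges_minus_def by auto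
    have C: "\<not> connected_in (S - fst ?F') (edges_minus (set (take j es')) ?F') u v" if "e = {u, v}" for u v
    proof
      assume h: "connected_in (S - fst ?F') (edges_minus (set (take j es')) ?F') u v"
      have sub: "edges_minus (set (take j es')) ?F' \<subseteq> edges_minus (set (take i es)) (FV, FE)"
      proof
        fix x assume "x \<in> edges_minus (set (take j es')) ?F'"
        hence x: "x \<in> set (take i es)" "x \<subseteq> S" "x \<inter> (FV \<inter> V \<inter> S) = {}" "x \<notin> FE \<inter> set es \<inter> {x. x \<subseteq> S \<and> card x = 2}"
          unfolding edges_minus_def tk by auto
        have "x \<in> set es" using x(1) by (meson in_set_takeD)
        hence "card x = 2" using ed by blast
        thus "x \<in> edges_minus (set (take i es)) (FV, FE)"
          using x `x \<in> set es` assms(3) unfolding edges_minus_def by auto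
      qed
      have "connected_in (V - FV) (edges_minus (set (take i es)) (FV, FE)) u v"
        using h assms(3) rtranclp_mono_E[OF _ sub] unfolding connected_in_def by auto
      thus False using c(3)[OF that] by simp
    qed
    show "let e = fst (restrict_bs V es S bs ! j); F = snd (restrict_bs V es S bs ! j)
        in in_VE S es' F \<and> \<not> damages es' F e \<and>
           (\<forall>u v. e = {u, v} \<longrightarrow> \<not> connected_in (S - fst F) (edges_minus (set (take j es')) F) u v)"
      unfolding rj using A B C by (simp add: Let_def)
  qed
qed

end
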